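(* Let $\mathbf{H}$ be a finite commutative semihypergroup with states $e_1,\dots,e_n$ that is derived from a group. Then there exist an abelian group $G$ of order $n$ and an enumeration $G=\{g_1,\dots,g_n\}$ such that every matrix $A_i$ ($i=1,\dots,n$) is a linear combination of the matrices $G_1,\dots,G_n$ of the regular representation of $G$, where $G_l$ is the $n\times n$ permutation matrix with $(k,j)$ entry equal to $1$ if $g_l g_j=g_k$ and $0$ otherwise.
   Context: A finite commutative semihypergroup $\mathbf{H}$ with $n$ states $e_1,\dots,e_n$ is given by a convolution $e_i*e_j=\sum_{k=1}^n a_{i,j}(k)e_k$ ($i,j=1,\dots,n$), extended bilinearly, where $a_{i,j}(k)\ge 0$, $\sum_{k=1}^n a_{i,j}(k)=1$ for all $i,j$, the convolution is associative and commutative ($a_{i,j}(k)=a_{j,i}(k)$). Let $a_{i,j}\in\mathbb{R}^n$ denote the column vector $(a_{i,j}(1),\dots,a_{i,j}(n))^T$; let $A_i$ be the $n\times n$ matrix with columns $a_{i,1},\dots,a_{i,n}$ (so its $(k,j)$ entry is $a_{i,j}(k)$) and $B_i$ the matrix with columns $a_{1,i},\dots,a_{n,i}$. $\mathbf{H}$ is called derived from a group if it satisfies condition (A): the set $\{a_{i,j}: 1\le i,j\le n\}$ contains exactly $n$ distinct vectors, and for each $i$ the columns of $A_i$ are linearly independent and the columns of $B_i$ are linearly independent. *)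

theory Defs
  imports "HOL-Analysis.Analysis" "HOL-Algebra.Group"
begin

text \<open>States are indexed by a finite type 'n (so n = CARD('n)).
  The structure constants are a i j k = a_{i,j}(k), the coefficient of e_k in e_i * e_j.\<close>

definition comm_semihypergroup :: "('n::finite \<Rightarrow> 'n \<Rightarrow> 'n \<Rightarrow> real) \<Rightarrow> bool" where
  "comm_semihypergroup a \<longleftrightarrow>
     (\<forall>i j k. a i j k \<ge> 0) \<and>
     (\<forall>i j. (\<Sum>k\<in>UNIV. a i j k) = 1) \<and>
     (\<forall>i j k. a i j k = a j i k) \<and>
     (\<forall>i j m p. (\<Sum>k\<in>UNIV. a i j k * a k m p) = (\<Sum>k\<in>UNIV. a j m k * a i k p))"

definition svec :: "('n::finite \<Rightarrow> 'n \<Rightarrow> 'n \<Rightarrow> real) \<Rightarrow> 'n \<Rightarrow> 'n \<Rightarrow> real ^ 'n" where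
  "svec a i j = (\<chi> k. a i j k)"

definition lin_indep_family :: "('n::finite \<Rightarrow> real ^ 'm) \<Rightarrow> bool" where
  "lin_indep_family v \<longleftrightarrow> (\<forall>c. (\<Sum>j\<in>UNIV. c j *\<^sub>R v j) = 0 \<longrightarrow> (\<forall>j. c j = 0))"

definition derived_from_group :: "('n::finite \<Rightarrow> 'n \<Rightarrow> 'n \<Rightarrow> real) \<Rightarrow> bool" where
  "derived_from_group a \<longleftrightarrow>
     card {svec a i j | i j. True} = CARD('n) \<and>
     (\<forall>i. lin_indep_family (\<lambda>j. svec a i j)) \<and>
     (\<forall>i. lin_indep_family (\<lambda>j. svec a j i))"

definition Amat :: "('n::finite \<Rightarrow> 'n \<Rightarrow> 'n \<Rightarrow> real) \<Rightarrow> 'n \<Rightarrow> real ^ 'n ^ 'n" where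
  "Amat a i = (\<chi> k j. a i j k)"

definition regmat :: "('b, 'c) monoid_scheme \<Rightarrow> ('n::finite \<Rightarrow> 'b) \<Rightarrow> 'n \<Rightarrow> real ^ 'n ^ 'n" where
  "regmat G g l = (\<chi> k j. if g l \<otimes>\<^bsub>G\<^esub> g j = g k then 1 else 0)"

end

theory Submission
  imports Defs
begin

lemma sum_delta_mult: "(\<Sum>k\<in>(UNIV::'a::finite set). (if k = i then (1::real) else 0) * f k) = f i"
proof -
  have *: "(\<lambda>k. (if k = i then (1::real) else 0) * f k) = (\<lambda>k. if k = i then f k else 0)" by auto
  show ?thesis unfolding * by simp
qed

lemma swap4: "(\<Sum>k\<in>(UNIV::'a::finite set). \<Sum>m\<in>(UNIV::'b::finite set). \<Sum>i\<in>(UNIV::'c::finite set). \<Sum>j\<in>(UNIV::'d::finite set). F i j m k) =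
   (\<Sum>i\<in>UNIV. \<Sum>j\<in>UNIV. \<Sum>m\<in>UNIV. \<Sum>k\<in>UNIV. (F i j m k :: real))"
proof -
  have "(\<Sum>k\<in>(UNIV::'a set). \<Sum>m\<in>(UNIV::'b set). \<Sum>i\<in>(UNIV::'c set). \<Sum>j\<in>(UNIV::'d set). F i j m k)
     = (\<Sum>k\<in>UNIV. \<Sum>i\<in>UNIV. \<Sum>m\<in>UNIV. \<Sum>j\<in>UNIV. F i j m k)"
    by (rule sum.cong[OF refl], rule sum.swap)
  also have "\<dots> = (\<Sum>k\<in>UNIV. \<Sum>i\<in>UNIV. \<Sum>j\<in>UNIV. \<Sum>m\<in>UNIV. F i j m k)"
    by (rule sum.cong[OF refl], rule sum.cong[OF refl], rule sum.swap)
  also have "\<dots> = (\<Sum>i\<in>UNIV. \<Sum>k\<in>UNIV. \<Sum>j\<in>UNIV. \<Sum>m\<in>UNIV. F i j m k)"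
    by (rule sum.swap)
  also have "\<dots> = (\<Sum>i\<in>UNIV. \<Sum>j\<in>UNIV. \<Sum>k\<in>UNIV. \<Sum>m\<in>UNIV. F i j m k)"
    by (rule sum.cong[OF refl], rule sum.swap)
  also have "\<dots> = (\<Sum>i\<in>UNIV. \<Sum>j\<in>UNIV. \<Sum>m\<in>UNIV. \<Sum>k\<in>UNIV. F i j m k)"
    by (rule sum.cong[OF refl], rule sum.cong[OF refl], rule sum.swap)
  finally show ?thesis .
qed

lemma swap3: "(\<Sum>i\<in>(UNIV::'c::finite set). \<Sum>k\<in>(UNIV::'a::finite set). \<Sum>j\<in>(UNIV::'d::finite set). \<Sum>m\<in>(UNIV::'b::finite set). F i j m k) =
   (\<Sum>i\<in>UNIV. \<Sum>j\<in>UNIV. \<Sum>m\<in>UNIV. \<Sum>k\<in>UNIV. (F i j m k :: real))"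
proof -
  have "(\<Sum>i\<in>(UNIV::'c set). \<Sum>k\<in>(UNIV::'a set). \<Sum>j\<in>(UNIV::'d set). \<Sum>m\<in>(UNIV::'b set). F i j m k)
     = (\<Sum>i\<in>UNIV. \<Sum>j\<in>UNIV. \<Sum>k\<in>UNIV. \<Sum>m\<in>UNIV. F i j m k)"
    by (rule sum.cong[OF refl], rule sum.swap)
  also have "\<dots> = (\<Sum>i\<in>UNIV. \<Sum>j\<in>UNIV. \<Sum>m\<in>UNIV. \<Sum>k\<in>UNIV. F i j m k)"
    by (rule sum.cong[OF refl], rule sum.cong[OF refl], rule sum.swap)
  finally show ?thesis .
qed

locale shg =
  fixes a :: "'n::finite \<Rightarrow> 'n \<Rightarrow> 'n \<Rightarrow> real"
  assumes csh: "comm_semihypergroup a"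
    and dfg: "derived_from_group a"
begin

definition d :: "'n \<Rightarrow> real^'n" where "d i = (\<chi> k. if k = i then 1 else 0)"
definition mul :: "real^'n \<Rightarrow> real^'n \<Rightarrow> real^'n" where
  "mul x y = (\<chi> p. \<Sum>i\<in>UNIV. \<Sum>j\<in>UNIV. x$i * y$j * a i j p)"

lemma acomm: "a i j k = a j i k" using csh unfolding comm_semihypergroup_def by blast
lemma aassoc: "(\<Sum>k\<in>UNIV. a i j k * a k m p) = (\<Sum>k\<in>UNIV. a j m k * a i k p)"
  using csh unfolding comm_semihypergroup_def by blast

lemma mul_dd: "mul (d i) (d j) = svec a i j"
proof -
  have "mul (d i) (d j) $ p = a i j p" for p
  proof -
    have "mul (d i) (d j) $ p = (\<Sum>ib\<in>UNIV. (if ib = i then 1 else 0) * (\<Sum>ja\<in>UNIV. (if ja = j then 1 else 0) * a ib ja p))"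
      by (simp add: mul_def d_def sum_distrib_left mult.assoc)
    also have "\<dots> = a i j p" by (simp add: sum_delta_mult)
    finally show ?thesis .
  qed
  then show ?thesis by (simp add: vec_eq_iff svec_def)
qed

lemma mul_comm: "mul x y = mul y x"
  unfolding mul_def
  apply (simp add: vec_eq_iff)  apply (subst sum.swap) by (simp add: acomm mult_ac)

lemma mul_assoc: "mul (mul x y) z = mul x (mul y z)"
proof -
  have "(mul (mul x y) z)$p = (mul x (mul y z))$p" for p
  proof -
    have "(mul (mul x y) z)$p = (\<Sum>k\<in>UNIV. \<Sum>m\<in>UNIV. (\<Sum>i\<in>UNIV. \<Sum>j\<in>UNIV. x$i*y$j*a i j k) * z$m * a k m p)"
      by (simp add: mul_def)
    also have "\<dots> = (\<Sum>k\<in>UNIV. \<Sum>m\<in>UNIV. \<Sum>i\<in>UNIV. \<Sum>j\<in>UNIV. x$i*y$j*z$m * (a i j k * a k m p))"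
      by (simp add: sum_distrib_left sum_distrib_right mult_ac)
    also have "\<dots> = (\<Sum>i\<in>UNIV. \<Sum>j\<in>UNIV. \<Sum>m\<in>UNIV. \<Sum>k\<in>UNIV. x$i*y$j*z$m * (a i j k * a k m p))"
      by (rule swap4)
    also have "\<dots> = (\<Sum>i\<in>UNIV. \<Sum>j\<in>UNIV. \<Sum>m\<in>UNIV. x$i*y$j*z$m * (\<Sum>k\<in>UNIV. a i j k * a k m p))"
      by (simp add: sum_distrib_left)
    also have "\<dots> = (\<Sum>i\<in>UNIV. \<Sum>j\<in>UNIV. \<Sum>m\<in>UNIV. x$i*y$j*z$m * (\<Sum>k\<in>UNIV. a j m k * a i k p))"
      by (simp add: aassoc)
    also have "\<dots> = (\<Sum>i\<in>UNIV. \<Sum>j\<in>UNIV. \<Sum>m\<in>UNIV. \<Sum>k\<in>UNIV. x$i*y$j*z$m * (a j m k * a i k p))"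
      by (simp add: sum_distrib_left)
    also have "\<dots> = (\<Sum>i\<in>UNIV. \<Sum>k\<in>UNIV. \<Sum>j\<in>UNIV. \<Sum>m\<in>UNIV. x$i*y$j*z$m * (a j m k * a i k p))"
      by (rule swap3[symmetric])
    also have "\<dots> = (\<Sum>i\<in>UNIV. \<Sum>k\<in>UNIV. x$i * (\<Sum>j\<in>UNIV. \<Sum>m\<in>UNIV. y$j*z$m*a j m k) * a i k p)"
      by (simp add: sum_distrib_left sum_distrib_right mult_ac)
    also have "\<dots> = (mul x (mul y z))$p" by (simp add: mul_def)
    finally show ?thesis .
  qed
  then show ?thesis by (simp add: vec_eq_iff)
qed


lemma mul_d_left: "mul (d i) x = (\<Sum>j\<in>UNIV. x$j *\<^sub>R svec a i j)"
proof -
  have "mul (d i) x $ p = (\<Sum>j\<in>UNIV. x$j *\<^sub>R svec a i j) $ p" for p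
  proof -
    have "mul (d i) x $ p = (\<Sum>ib\<in>UNIV. (if ib = i then 1 else 0) * (\<Sum>ja\<in>UNIV. x$ja * a ib ja p))"
      by (simp add: mul_def d_def sum_distrib_left mult.assoc)
    also have "\<dots> = (\<Sum>ja\<in>UNIV. x$ja * a i ja p)" by (simp add: sum_delta_mult)
    finally show ?thesis by (simp add: sum_component svec_def)
  qed
  then show ?thesis by (simp add: vec_eq_iff)
qed

lemma mul_d_right: "mul x (d m) = (\<Sum>k\<in>UNIV. x$k *\<^sub>R svec a k m)"
proof -
  have "mul x (d m) = (\<Sum>k\<in>UNIV. x$k *\<^sub>R svec a m k)" by (simp add: mul_comm[of x] mul_d_left)
  also have "\<dots> = (\<Sum>k\<in>UNIV. x$k *\<^sub>R svec a k m)" by (simp add: svec_def acomm[of m])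
  finally show ?thesis .
qed

lemma cancel: assumes "mul (d i) x = mul (d i) y" shows "x = y"
proof -
  have li: "lin_indep_family (\<lambda>j. svec a i j)" using dfg unfolding derived_from_group_def by blast
  have "(\<Sum>j\<in>UNIV. (x$j - y$j) *\<^sub>R svec a i j) = (\<Sum>j\<in>UNIV. x$j *\<^sub>R svec a i j) - (\<Sum>j\<in>UNIV. y$j *\<^sub>R svec a i j)"
    by (simp add: scaleR_left_diff_distrib sum_subtractf)
  also have "\<dots> = 0" using assms by (simp add: mul_d_left)
  finally have "\<forall>j. x$j - y$j = 0" using li[unfolded lin_indep_family_def, rule_format, of "\<lambda>j. x$j - y$j"] by simp
  then show ?thesis by (simp add: vec_eq_iff)
qed

lemma d_inj: "d x = d y \<Longrightarrow> x = y"
  by (simp add: d_def vec_eq_iff) (metis zero_neq_one)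

lemma svec_inj: "svec a i j = svec a i j' \<Longrightarrow> j = j'"
  using cancel[of i "d j" "d j'"] d_inj by (simp add: mul_dd)

lemma svec_surj: "\<exists>j'. svec a i' j' = svec a i j"
proof -
  let ?V = "{svec a i j | i j. True}"
  have cV: "card ?V = CARD('n)" using dfg unfolding derived_from_group_def by blast
  have fV: "finite ?V"
  proof -
    have "?V = (\<lambda>(i,j). svec a i j) ` UNIV" by auto
    then show ?thesis by simp
  qed
  have sub: "range (svec a i') \<subseteq> ?V" by auto
  have inj: "inj (svec a i')" by (meson injI svec_inj)
  have "card (range (svec a i')) = CARD('n)" using inj by (simp add: card_image)
  then have "range (svec a i') = ?V" using card_subset_eq[OF fV sub] cV by simp
  moreover have "svec a i j \<in> ?V" by blast
  ultimately show ?thesis by (metis rangeE)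
qed

definition i0 :: 'n where "i0 = undefined"
definition op :: "'n \<Rightarrow> 'n \<Rightarrow> 'n" where "op i j = (THE m. svec a i0 m = svec a i j)"

lemma op_ex1: "\<exists>!m. svec a i0 m = svec a i j"
  using svec_surj svec_inj by metis

lemma op_spec: "svec a i0 (op i j) = svec a i j"
  unfolding op_def by (rule theI'[OF op_ex1])

lemma op_unique: "svec a i0 m = svec a i j \<Longrightarrow> op i j = m"
  unfolding op_def by (rule the1_equality[OF op_ex1])

lemma op_eq: "mul (d i0) (d (op i j)) = mul (d i) (d j)"
  by (simp add: mul_dd op_spec)

lemma op_i0: "op i0 j = j" by (rule op_unique) simp

lemma op_comm: "op i j = op j i"
  unfolding op_def by (simp add: svec_def acomm[of i])

lemma mul_lcomm: "mul x (mul y z) = mul y (mul x z)"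
  by (metis mul_assoc mul_comm)

lemma op_assoc: "op (op i j) m = op i (op j m)"
proof -
  have 1: "mul (d i0) (mul (d i0) (d (op (op i j) m))) = mul (mul (d i) (d j)) (d m)"
    by (simp add: op_eq flip: mul_assoc)
  have 2: "mul (d i0) (mul (d i0) (d (op i (op j m)))) = mul (mul (d i) (d j)) (d m)"
    by (simp add: op_eq mul_assoc) (metis mul_lcomm op_eq)
  from 1 2 have "d (op (op i j) m) = d (op i (op j m))" using cancel by metis
  then show ?thesis by (rule d_inj)
qed

lemma op_inv: "\<exists>j. op j i = i0"
proof -
  obtain j where "svec a i j = svec a i0 i0" using svec_surj by blast
  then have "op i j = i0" by (intro op_unique) simp
  then show ?thesis using op_comm by metis
qed

lemma mul_d_sum: "mul (d i) (\<Sum>k\<in>UNIV. c k *\<^sub>R y k) = (\<Sum>k\<in>UNIV. c k *\<^sub>R mul (d i) (y k))"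
proof -
  have "mul (d i) (\<Sum>k\<in>UNIV. c k *\<^sub>R y k) = (\<Sum>j\<in>UNIV. (\<Sum>k\<in>UNIV. c k * y k $ j) *\<^sub>R svec a i j)"
    by (simp add: mul_d_left sum_component)
  also have "\<dots> = (\<Sum>j\<in>UNIV. \<Sum>k\<in>UNIV. c k *\<^sub>R (y k $ j *\<^sub>R svec a i j))"
    by (simp add: scaleR_sum_left)
  also have "\<dots> = (\<Sum>k\<in>UNIV. \<Sum>j\<in>UNIV. c k *\<^sub>R (y k $ j *\<^sub>R svec a i j))"
    by (rule sum.swap)
  also have "\<dots> = (\<Sum>k\<in>UNIV. c k *\<^sub>R mul (d i) (y k))"
    by (simp add: mul_d_left scaleR_sum_right)
  finally show ?thesis .
qed

lemma key: "mul (d i0) (d m) = (\<Sum>k\<in>UNIV. a i0 i0 k *\<^sub>R d (op k m))"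
proof (rule cancel[of i0])
  have "mul (d i0) (mul (d i0) (d m)) = mul (svec a i0 i0) (d m)"
    by (metis mul_assoc mul_dd)
  also have "\<dots> = (\<Sum>k\<in>UNIV. a i0 i0 k *\<^sub>R svec a k m)"
    by (simp add: mul_d_right svec_def)
  also have "\<dots> = (\<Sum>k\<in>UNIV. a i0 i0 k *\<^sub>R mul (d i0) (d (op k m)))"
    by (simp add: op_spec mul_dd)
  also have "\<dots> = mul (d i0) (\<Sum>k\<in>UNIV. a i0 i0 k *\<^sub>R d (op k m))"
    by (simp add: mul_d_sum)
  finally show "mul (d i0) (mul (d i0) (d m)) = mul (d i0) (\<Sum>k\<in>UNIV. a i0 i0 k *\<^sub>R d (op k m))" .
qed

lemma entry: "a i j p = (\<Sum>k\<in>UNIV. a i0 i0 k * (if op k (op i j) = p then 1 else 0))"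
proof -
  have "a i j p = svec a i j $ p" by (simp add: svec_def)
  also have "\<dots> = mul (d i0) (d (op i j)) $ p" by (simp add: mul_dd op_spec)
  also have "\<dots> = (\<Sum>k\<in>UNIV. a i0 i0 k * (if op k (op i j) = p then 1 else 0))"
    unfolding key by (simp add: sum_component d_def eq_commute)
  finally show ?thesis .
qed

end

lemma sum_delta_mult': "(\<Sum>l\<in>(UNIV::'a::finite set). (if x = l then (1::real) else 0) * f l) = f x"
  using sum_delta_mult[of x f] by (simp add: eq_commute)

theorem corollary4:
  fixes a :: "'n::finite \<Rightarrow> 'n \<Rightarrow> 'n \<Rightarrow> real"
  assumes "comm_semihypergroup a"
    and "derived_from_group a"
  shows "\<exists>(G :: nat monoid) (g :: 'n \<Rightarrow> nat).
           comm_group G \<and> card (carrier G) = CARD('n) \<and>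
           bij_betw g UNIV (carrier G) \<and>
           (\<forall>i. \<exists>c :: 'n \<Rightarrow> real. Amat a i = (\<Sum>l\<in>UNIV. c l *\<^sub>R regmat G g l))"
proof -
  interpret shg a using assms by unfold_locales
  obtain enc :: "'n \<Rightarrow> nat" where inj: "inj enc"
    using finite_imp_inj_to_nat_seg[of "UNIV :: 'n set"] by auto
  have iv: "inv_into UNIV enc (enc k) = k" for k using inj by simp
  define G where "G = (\<lparr>carrier = range enc, mult = (\<lambda>x y. enc (op (inv_into UNIV enc x) (inv_into UNIV enc y))), one = enc i0\<rparr> :: nat monoid)"
  have cg: "comm_group G"
  proof (rule comm_groupI)
    fix x assume "x \<in> carrier G"
    then obtain k where k: "x = enc k" by (auto simp: G_def)
    obtain j where "op j k = i0" using op_inv by blast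
    then show "\<exists>y\<in>carrier G. y \<otimes>\<^bsub>G\<^esub> x = \<one>\<^bsub>G\<^esub>"
      by (intro bexI[of _ "enc j"]) (auto simp: G_def k iv)
  qed (auto simp: G_def iv op_assoc op_i0 op_comm[of _ i0], metis op_comm)
  have mG: "enc l \<otimes>\<^bsub>G\<^esub> enc j = enc (op l j)" for l j by (simp add: G_def iv)
  have A: "\<exists>c :: 'n \<Rightarrow> real. Amat a i = (\<Sum>l\<in>UNIV. c l *\<^sub>R regmat G enc l)" for i
  proof (intro exI)
    let ?c = "\<lambda>l. \<Sum>k\<in>UNIV. a i0 i0 k * (if op k i = l then 1 else 0)"
    have "Amat a i $ p $ j = (\<Sum>l\<in>UNIV. ?c l *\<^sub>R regmat G enc l) $ p $ j" for p j
    proof -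
      have "(\<Sum>l\<in>UNIV. ?c l *\<^sub>R regmat G enc l) $ p $ j = (\<Sum>l\<in>UNIV. ?c l * (if op l j = p then 1 else 0))"
        by (simp add: sum_component regmat_def mG inj_eq[OF inj])
      also have "\<dots> = (\<Sum>l\<in>UNIV. \<Sum>k\<in>UNIV. a i0 i0 k * ((if op k i = l then 1 else 0) * (if op l j = p then 1 else 0)))"
        by (simp add: sum_distrib_right mult.assoc)
      also have "\<dots> = (\<Sum>k\<in>UNIV. \<Sum>l\<in>UNIV. a i0 i0 k * ((if op k i = l then 1 else 0) * (if op l j = p then 1 else 0)))"
        by (rule sum.swap)
      also have "\<dots> = (\<Sum>k\<in>UNIV. a i0 i0 k * (\<Sum>l\<in>UNIV. (if op k i = l then 1 else 0) * (if op l j = p then 1 else 0)))"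
        by (simp add: sum_distrib_left)
      also have "\<dots> = (\<Sum>k\<in>UNIV. a i0 i0 k * (if op (op k i) j = p then 1 else 0))"
        by (simp only: sum_delta_mult')
      also have "\<dots> = a i j p" by (simp add: entry[of i j p] op_assoc)
      finally show ?thesis by (simp add: Amat_def)
    qed
    then show "Amat a i = (\<Sum>l\<in>UNIV. ?c l *\<^sub>R regmat G enc l)" by (simp add: vec_eq_iff)
  qed
  have "card (carrier G) = CARD('n)" using inj by (simp add: G_def card_image)
  moreover have "bij_betw enc UNIV (carrier G)" using inj by (simp add: G_def bij_betw_def)
  ultimately show ?thesis using cg A by blast
qed

end
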